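(* Let $n\ge3$, let $U\subseteq\mathbb{R}^n$ be a convex open set, and for $1\le i,j\le n$ let $g_{ij}:\mathbb{R}\to\mathbb{R}$ be continuously differentiable functions with $g_{ij}=g_{ji}$, such that for all $x\in U$: $g_{ij}'(x_i+x_j)\ge\ell$ for all $i\ne j$ (for some fixed $\ell>0$) and $g_{ii}'(2x_i)\ge0$ for all $i$. Define $F:U\to\mathbb{R}^n$ by $F(x)=(F_1(x),\dots,F_n(x))$ with $F_i(x)=\sum_{j=1}^n g_{ij}(x_i+x_j)$. Then $F$ is injective on $U$, and for all $d,\hat d\in F(U)$, $$|F^{-1}(d)-F^{-1}(\hat d)|_\infty\le\frac{3n-4}{2\ell(n-1)(n-2)}\,|d-\hat d|_\infty.$$
   Context: $|v|_\infty=\max_i|v_i|$ is the maximum norm on $\mathbb{R}^n$. *)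

theory Defs
  imports "HOL-Analysis.Analysis"
begin

definition maxnorm :: "real ^ 'n \<Rightarrow> real" where
  "maxnorm v = Max (range (\<lambda>i. \<bar>v $ i\<bar>))"

end

theory Submission
  imports Defs
begin

lemma polyineq:
  fixes N M s u :: real
  assumes N: "N \<ge> 3" and M: "M \<ge> 0" and s: "s \<ge> (N-2)^2/(3*N-4) * M" and u: "u \<ge> M + s"
  shows "2*(N-1)*(N-2)/(3*N-4) * M * (M+u) \<le> (N-2)*(M^2 + u^2/(N-1)) + s^2"
proof -
  define D where "D = 3*N-4"
  have D: "D > 0" using N by (simp add: D_def)
  define K where "K = 2*(N-1)*(N-2)/D"
  define s0 where "s0 = (N-2)^2/D"
  define r where "r = 1/(N-1)"
  have s0: "s0 \<ge> 0" using D by (simp add: s0_def)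
  have N1: "N - 1 > 0" using N by simp
  have r: "r > 0" "r * (N-1) = 1" using N1 by (auto simp: r_def)
  have sM: "s \<ge> s0 * M" using s by (simp add: s0_def D_def)
  have key1: "(N-2)*(2 + 2* s0)*r + 2* s0 \<ge> K"
  proof -
    have e: "D + (N-2)^2 = N*(N-1)" by (simp add: D_def power2_eq_square algebra_simps)
    have "(N-2)*(2 + 2* s0)*r = 2*(N-2)*(D + (N-2)^2)/(D*(N-1))"
      using D N1 by (simp add: s0_def r_def field_simps)
    also have "\<dots> = 2*(N-2)*N/D" unfolding e using D N1 by (simp add: field_simps)
    finally have "(N-2)*(2 + 2* s0)*r = 2*(N-2)*N/D" .
    moreover have "2*(N-2)*N/D \<ge> K" unfolding K_def using D N
      by (intro divide_right_mono) (auto simp: algebra_simps)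
    ultimately show ?thesis using s0 by linarith
  qed
  define h where "h = (\<lambda>s. (N-2)*M^2 + (N-2)*(M+s)^2*r + s^2 - K*M*(2*M+s))"
  have h0: "h (s0*M) = 0"
  proof -
    have "h (s0*M) = M^2 * ((N-2) + (N-2)*(1+s0)^2*r + s0^2 - K*(2+s0))"
      unfolding h_def by (simp add: algebra_simps power2_eq_square)
    moreover have "(N-2) + (N-2)*(1+s0)^2*r + s0^2 - K*(2+s0) = 0"
      using D N1 unfolding K_def s0_def r_def
      by (simp add: field_simps power2_eq_square) (simp add: D_def algebra_simps)
    ultimately show ?thesis by simp
  qed
  have hdiff: "h s - h (s0*M) = (s - s0*M) * ((N-2)*(2*M + s + s0*M)*r + (s + s0*M) - K*M)"
    unfolding h_def by (simp add: algebra_simps power2_eq_square)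
  have br: "(N-2)*(2*M + s + s0*M)*r + (s + s0*M) - K*M \<ge> 0"
  proof -
    have "(N-2)*(2*M + s + s0*M)*r \<ge> (N-2)*(2*M + 2* s0*M)*r"
      using sM N r by (intro mult_right_mono mult_left_mono) (auto simp: mult.commute)
    moreover have "(N-2)*(2*M + 2* s0*M)*r + 2* s0*M \<ge> K*M"
      using mult_right_mono[OF key1 M] by (simp add: algebra_simps)
    ultimately show ?thesis using sM by linarith
  qed
  have hs: "h s \<ge> 0" using hdiff br sM h0 by (metis diff_ge_0_iff_ge mult_nonneg_nonneg)
  define w where "w = M + s"
  have wge: "w \<ge> (N-1)^2/D * M"
  proof -
    have "w \<ge> (1 + s0) * M" using sM by (simp add: w_def algebra_simps)
    moreover have "1 + s0 \<ge> (N-1)^2/D"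
    proof -
      have NN: "N*(N*3) \<ge> N*9" using N by (simp add: mult_left_mono)
      show ?thesis using D N unfolding s0_def D_def
        apply (simp add: field_simps power2_eq_square)
        using NN by linarith
    qed
    ultimately show ?thesis using M mult_right_mono by (smt (verit))
  qed
  have fu: "(N-2)*u^2*r - K*M*u \<ge> (N-2)*w^2*r - K*M*w"
  proof -
    have eq: "((N-2)*u^2*r - K*M*u) - ((N-2)*w^2*r - K*M*w) = (u - w)*((N-2)*(u+w)*r - K*M)"
      by (simp add: algebra_simps power2_eq_square)
    have uw: "u \<ge> w" using u by (simp add: w_def)
    have "(N-2)*(u+w)*r \<ge> (N-2)*(2*((N-1)^2/D * M))*r"
      using uw wge N r by (intro mult_right_mono mult_left_mono) auto
    moreover have "(N-2)*(2*((N-1)^2/D * M))*r = K*M"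
      using N1 D unfolding K_def r_def by (simp add: field_simps power2_eq_square)
    ultimately have "(N-2)*(u+w)*r - K*M \<ge> 0" by linarith
    with eq uw show ?thesis by (metis diff_ge_0_iff_ge mult_nonneg_nonneg)
  qed
  have "h s = (N-2)*M^2 + ((N-2)*w^2*r - K*M*w) + s^2 - K*M*M"
    unfolding h_def w_def by (simp add: algebra_simps)
  then have "K*M*(M+u) \<le> (N-2)*M^2 + (N-2)*u^2*r + s^2"
    using hs fu by (simp add: algebra_simps)
  moreover have "(N-2)*u^2*r = (N-2)*(u^2/(N-1))" by (simp add: r_def)
  ultimately show ?thesis unfolding K_def D_def by (simp add: algebra_simps)
qed

lemma core:
  fixes d D :: "'n::finite \<Rightarrow> real" and c :: "'n \<Rightarrow> 'n \<Rightarrow> real"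
  assumes n3: "CARD('n) \<ge> 3" and lpos: "l > 0"
    and csym: "\<And>i j. c i j = c j i" and coff: "\<And>i j. i \<noteq> j \<Longrightarrow> c i j \<ge> l"
    and cdiag: "\<And>i. c i i \<ge> 0"
    and DD: "\<And>i. D i = (\<Sum>j\<in>UNIV. c i j * (d i + d j))"
    and dM: "\<And>i. \<bar>d i\<bar> \<le> M" and dk: "\<bar>d k\<bar> = M" and Da: "\<And>i. \<bar>D i\<bar> \<le> a"
  shows "2*(real CARD('n)-1)*(real CARD('n)-2)/(3*real CARD('n)-4) * l * M \<le> a"
proof -
  define N where "N = real CARD('n)"
  have N3: "N \<ge> 3" using n3 by (simp add: N_def)
  define K where "K = 2*(N-1)*(N-2)/(3*N-4)"
  define \<sigma> where "\<sigma> = (\<Sum>j\<in>UNIV. d j)"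
  define e :: real where "e = (if d k \<ge> 0 then 1 else -1)"
  have edk: "e * d k = M" using dk by (auto simp: e_def)
  have ee: "e * e = 1" by (simp add: e_def)
  have M0: "M \<ge> 0" using dk by auto
  have a0: "a \<ge> 0" using Da[of k] by linarith
  have I: "a \<ge> l * ((N-2)*M + e*\<sigma>)"
  proof -
    have "e * D k = (\<Sum>j\<in>UNIV. c k j * (e * d k + e * d j))"
      unfolding DD sum_distrib_left by (simp add: algebra_simps)
    also have "\<dots> = (\<Sum>j\<in>UNIV. c k j * (M + e * d j))" using edk by simp
    also have "\<dots> \<ge> (\<Sum>j\<in>UNIV. l * (M + e * d j) - (if j = k then 2*l*M else 0))"
    proof (rule sum_mono)
      fix j :: 'n
      have ej: "M + e * d j \<ge> 0" using dM[of j] by (auto simp: e_def)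
      show "l * (M + e * d j) - (if j = k then 2*l*M else 0) \<le> c k j * (M + e * d j)"
      proof (cases "j = k")
        case True
        then show ?thesis using edk cdiag[of k] M0 by simp
      next
        case False
        then show ?thesis using coff[of k j] ej by (simp add: mult_right_mono)
      qed
    qed
    also have "(\<Sum>j\<in>UNIV. l * (M + e * d j) - (if j = k then 2*l*M else 0)) = l * ((N-2)*M + e*\<sigma>)"
      by (simp add: sum_subtractf sum.distrib sum_distrib_left[symmetric] N_def \<sigma>_def algebra_simps)
    finally have "e * D k \<ge> l * ((N-2)*M + e*\<sigma>)" .
    moreover have "e * D k \<le> a" using Da[of k] by (auto simp: e_def)
    ultimately show ?thesis by linarith
  qed
  define Q where "Q = (\<Sum>i\<in>UNIV. (d i)^2)"
  define u where "u = (\<Sum>i\<in>UNIV. \<bar>d i\<bar>)"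
  have II: "a * u \<ge> l * ((N-2)*Q + \<sigma>^2)"
  proof -
    have S1: "(\<Sum>i\<in>UNIV. d i * D i) = (\<Sum>i\<in>UNIV. \<Sum>j\<in>UNIV. c i j * d i * (d i + d j))"
      unfolding DD by (simp add: sum_distrib_left algebra_simps)
    have S2: "(\<Sum>i\<in>UNIV. \<Sum>j\<in>UNIV. c i j * d i * (d i + d j)) = (\<Sum>i\<in>UNIV. \<Sum>j\<in>UNIV. c i j * d j * (d i + d j))"
      by (subst sum.swap) (simp add: csym algebra_simps)
    have S3: "2 * (\<Sum>i\<in>UNIV. d i * D i) = (\<Sum>i\<in>UNIV. \<Sum>j\<in>UNIV. c i j * (d i + d j)^2)"
    proof -
      have "2 * (\<Sum>i\<in>UNIV. d i * D i) = (\<Sum>i\<in>UNIV. \<Sum>j\<in>UNIV. c i j * d i * (d i + d j)) + (\<Sum>i\<in>UNIV. \<Sum>j\<in>UNIV. c i j * d j * (d i + d j))"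
        using S1 S2 by simp
      also have "\<dots> = (\<Sum>i\<in>UNIV. \<Sum>j\<in>UNIV. c i j * (d i + d j)^2)"
        by (simp add: sum.distrib[symmetric] power2_eq_square algebra_simps)
      finally show ?thesis .
    qed
    have S4: "(\<Sum>i\<in>UNIV. \<Sum>j\<in>UNIV. c i j * (d i + d j)^2) \<ge> (\<Sum>i\<in>UNIV. \<Sum>j\<in>UNIV. l * (d i + d j)^2 - (if i = j then l * (2 * d i)^2 else 0))"
    proof (intro sum_mono)
      fix i j :: 'n
      show "l * (d i + d j)^2 - (if i = j then l * (2 * d i)^2 else 0) \<le> c i j * (d i + d j)^2"
      proof (cases "i = j")
        case True
        then show ?thesis using cdiag[of i] by simp
      next
        case False
        then show ?thesis using coff[of i j] by (simp add: mult_right_mono)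
      qed
    qed
    have S5: "(\<Sum>i\<in>UNIV. \<Sum>j\<in>UNIV. l * (d i + d j)^2 - (if i = j then l * (2 * d i)^2 else 0)) = 2 * l * ((N-2)*Q + \<sigma>^2)"
    proof -
      have "(\<Sum>i\<in>UNIV. \<Sum>j\<in>UNIV. l * (d i + d j)^2 - (if i = j then l * (2 * d i)^2 else 0))
          = (\<Sum>i\<in>UNIV. \<Sum>j\<in>UNIV. l * (d i)^2 + l * (d j)^2 + 2 * l * (d i * d j)) - (\<Sum>i\<in>UNIV. 4 * l * (d i)^2)"
        by (simp add: sum_subtractf power2_eq_square algebra_simps)
      also have "\<dots> = 2 * l * ((N-2)*Q + \<sigma>^2)"
        by (simp add: sum.distrib sum_distrib_left[symmetric] sum_distrib_right[symmetric] Q_def \<sigma>_def N_def power2_eq_square algebra_simps) (simp add: sum_distrib_left algebra_simps)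
      finally show ?thesis .
    qed
    have S6: "(\<Sum>i\<in>UNIV. d i * D i) \<le> (\<Sum>i\<in>UNIV. \<bar>d i\<bar> * a)"
    proof (rule sum_mono)
      fix i
      have "d i * D i \<le> \<bar>d i\<bar> * \<bar>D i\<bar>" by (metis abs_ge_self abs_mult)
      also have "\<dots> \<le> \<bar>d i\<bar> * a" using Da[of i] by (simp add: mult_left_mono)
      finally show "d i * D i \<le> \<bar>d i\<bar> * a" .
    qed
    have "(\<Sum>i\<in>UNIV. \<bar>d i\<bar> * a) = a * u" unfolding u_def by (simp add: sum_distrib_left mult.commute[of _ a])
    with S3 S4 S5 S6 show ?thesis by linarith
  qed
  define u' where "u' = (\<Sum>j\<in>UNIV - {k}. \<bar>d j\<bar>)"
  define \<tau> where "\<tau> = (\<Sum>j\<in>UNIV - {k}. d j)"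
  have uu: "u = M + u'" unfolding u_def u'_def using dk by (simp add: sum.remove[of UNIV k])
  have \<sigma>\<tau>: "\<sigma> = d k + \<tau>" unfolding \<sigma>_def \<tau>_def by (simp add: sum.remove[of UNIV k])
  have Qsplit: "Q = M^2 + (\<Sum>j\<in>UNIV - {k}. (d j)^2)"
  proof -
    have "(d k)^2 = M^2" using dk by (metis power2_abs)
    then show ?thesis unfolding Q_def by (simp add: sum.remove[of UNIV k])
  qed
  have cardk: "card (UNIV - {k}) = CARD('n) - 1" by (simp add: card_Diff_singleton)
  have CS: "u'^2 \<le> (\<Sum>j\<in>UNIV - {k}. (d j)^2) * (N - 1)"
    using sum_squared_le_sum_of_squares[of "\<lambda>j. \<bar>d j\<bar>" "UNIV - {k}"] n3
    unfolding u'_def cardk N_def by (simp add: of_nat_diff)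
  have N1: "N - 1 > 0" using N3 by simp
  have Qge: "Q \<ge> M^2 + u'^2/(N-1)"
    using CS N1 unfolding Qsplit by (simp add: divide_le_eq)
  have \<tau>u: "\<bar>\<tau>\<bar> \<le> u'" unfolding \<tau>_def u'_def by (rule sum_abs)
  have e\<sigma>: "e * \<sigma> \<ge> M - u'"
  proof -
    have "\<bar>e * \<tau>\<bar> \<le> u'" using \<tau>u by (simp add: e_def)
    then show ?thesis using edk unfolding \<sigma>\<tau> by (simp add: algebra_simps)
  qed
  have s0eq: "(N-2) - K = (N-2)^2/(3*N-4)"
    using N3 unfolding K_def by (simp add: field_simps power2_eq_square)
  show ?thesis
  proof (cases "e * \<sigma> \<ge> (K - (N-2)) * M")
    case True
    then have "(N-2)*M + e*\<sigma> \<ge> K * M" by (simp add: algebra_simps)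
    then have "l * ((N-2)*M + e*\<sigma>) \<ge> l * (K * M)" using lpos by (simp add: mult_left_mono)
    with I show ?thesis unfolding K_def N_def by (simp add: algebra_simps)
  next
    case False
    define s where "s = - (e * \<sigma>)"
    have eqK: "(K-(N-2))*M = - ((N-2)^2/(3*N-4) * M)" by (metis s0eq minus_diff_eq mult_minus_left)
    have s1: "s \<ge> (N-2)^2/(3*N-4) * M" using False eqK unfolding s_def by linarith
    have s2: "u' \<ge> M + s" using e\<sigma> unfolding s_def by simp
    have ss: "s^2 = \<sigma>^2" unfolding s_def using ee by (simp add: power2_eq_square algebra_simps)
    have P: "K * M * (M + u') \<le> (N-2)*(M^2 + u'^2/(N-1)) + s^2"
      using polyineq[OF N3 M0 s1 s2] unfolding K_def .
    have "(N-2)*(M^2 + u'^2/(N-1)) \<le> (N-2)*Q" using Qge N3 by (simp add: mult_left_mono)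
    with P ss have "K * M * u \<le> (N-2)*Q + \<sigma>^2" unfolding uu by linarith
    then have "l * (K * M * u) \<le> a * u" using II lpos by (meson mult_left_mono less_imp_le order_trans)
    then have Lu: "(l * K * M) * u \<le> a * u" by (simp add: algebra_simps)
    show ?thesis
    proof (cases "M = 0")
      case True then show ?thesis using a0 by simp
    next
      case False
      have "u' \<ge> 0" unfolding u'_def by (simp add: sum_nonneg)
      then have "u > 0" using M0 False uu by linarith
      then have "l * K * M \<le> a" using Lu by simp
      then show ?thesis unfolding K_def N_def by (simp add: algebra_simps)
    qed
  qed
qed


lemma quot_mvt:
  fixes U :: "(real ^ 'n) set" and G G' :: "real \<Rightarrow> real"
  assumes convU: "convex U" and xU: "x \<in> U" and yU: "y \<in> U"
    and der: "\<And>t. (G has_real_derivative G' t) (at t)"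
    and pq: "x $ i + x $ j \<noteq> y $ i + y $ j"
  shows "\<exists>z\<in>U. (G (x $ i + x $ j) - G (y $ i + y $ j)) / ((x $ i + x $ j) - (y $ i + y $ j)) = G' (z $ i + z $ j)"
proof -
  define p where "p = x $ i + x $ j"
  define q where "q = y $ i + y $ j"
  have pq': "p \<noteq> q" using pq by (simp add: p_def q_def)
  have lt: "min p q < max p q" using pq' by (auto simp: min_def max_def)
  obtain \<xi> where \<xi>: "min p q < \<xi>" "\<xi> < max p q" "G (max p q) - G (min p q) = (max p q - min p q) * G' \<xi>"
    using MVT2[OF lt, of G G'] der by blast
  have quot: "(G p - G q) / (p - q) = G' \<xi>"
  proof (cases "q < p")
    case True
    then show ?thesis using \<xi>(3) by (simp add: min_def max_def)
  next
    case False
    then have "p < q" using pq' by simp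
    then have "G q - G p = (q - p) * G' \<xi>" using \<xi>(3) by (simp add: min_def max_def)
    then have "G p - G q = (p - q) * G' \<xi>" by (simp add: algebra_simps)
    then show ?thesis using pq' by simp
  qed
  define t where "t = (\<xi> - q) / (p - q)"
  have t0: "0 \<le> t" and t1: "t \<le> 1"
  proof -
    have "(q < p \<and> q < \<xi> \<and> \<xi> < p) \<or> (p < q \<and> p < \<xi> \<and> \<xi> < q)"
      using \<xi>(1,2) pq' by (auto simp: min_def max_def split: if_splits)
    then show "0 \<le> t" "t \<le> 1" unfolding t_def
      by (auto simp: divide_simps)
  qed
  define z where "z = (1 - t) *\<^sub>R y + t *\<^sub>R x"
  have zU: "z \<in> U" unfolding z_def using convexD[OF convU yU xU, of "1-t" t] t0 t1 by simp
  have "z $ i + z $ j = q + t * (p - q)"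
    unfolding z_def p_def q_def by (simp add: algebra_simps)
  also have "\<dots> = \<xi>" unfolding t_def using pq' by simp
  finally have "z $ i + z $ j = \<xi>" .
  then show ?thesis using zU quot unfolding p_def q_def by metis
qed

lemma maxnorm_ge: "\<bar>v $ i\<bar> \<le> maxnorm v"
  unfolding maxnorm_def by (rule Max_ge) auto

lemma maxnorm_attained: "\<exists>k. \<bar>v $ k\<bar> = maxnorm v"
proof -
  have "maxnorm v \<in> range (\<lambda>i. \<bar>v $ i\<bar>)" unfolding maxnorm_def by (rule Max_in) auto
  then show ?thesis by auto
qed

theorem theorem2p2:
  fixes U :: "(real ^ 'n) set"
    and g g' :: "'n \<Rightarrow> 'n \<Rightarrow> real \<Rightarrow> real"
    and l :: real
    and F :: "real ^ 'n \<Rightarrow> real ^ 'n"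
  assumes n3: "CARD('n) \<ge> 3"
    and convU: "convex U" and openU: "open U"
    and deriv: "\<And>i j t. (g i j has_real_derivative g' i j t) (at t)"
    and contd: "\<And>i j. continuous_on UNIV (g' i j)"
    and sym: "\<And>i j. g i j = g j i"
    and lpos: "l > 0"
    and offdiag: "\<And>x i j. x \<in> U \<Longrightarrow> i \<noteq> j \<Longrightarrow> g' i j (x $ i + x $ j) \<ge> l"
    and diag: "\<And>x i. x \<in> U \<Longrightarrow> g' i i (2 * x $ i) \<ge> 0"
    and F_def: "\<And>x. F x = (\<chi> i. \<Sum>j\<in>UNIV. g i j (x $ i + x $ j))"
  shows "inj_on F U \<and>
    (\<forall>d\<in>F ` U. \<forall>d'\<in>F ` U.
       maxnorm (the_inv_into U F d - the_inv_into U F d')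
         \<le> (3 * real CARD('n) - 4) / (2 * l * (real CARD('n) - 1) * (real CARD('n) - 2))
           * maxnorm (d - d'))"
proof -
  define N where "N = real CARD('n)"
  have N3: "N \<ge> 3" using n3 by (simp add: N_def)
  define K where "K = 2*(N-1)*(N-2)/(3*N-4)"
  have Kpos: "K > 0" using N3 by (simp add: K_def)
  have key: "K * l * maxnorm (x - y) \<le> maxnorm (F x - F y)" if xU: "x \<in> U" and yU: "y \<in> U" for x y
  proof -
    define c where "c i j = (if x $ i + x $ j = y $ i + y $ j then l
        else (g i j (x $ i + x $ j) - g i j (y $ i + y $ j)) / ((x $ i + x $ j) - (y $ i + y $ j)))" for i j
    have csym: "c i j = c j i" for i j unfolding c_def by (simp add: sym[of i j] add.commute)
    have cq: "c i j \<ge> l \<or> (i = j \<and> c i j \<ge> 0)" for i j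
    proof (cases "x $ i + x $ j = y $ i + y $ j")
      case True then show ?thesis by (simp add: c_def)
    next
      case False
      obtain z where zU: "z \<in> U" and zq: "(g i j (x $ i + x $ j) - g i j (y $ i + y $ j)) / ((x $ i + x $ j) - (y $ i + y $ j)) = g' i j (z $ i + z $ j)"
        using quot_mvt[OF convU xU yU deriv False] by blast
      have cz: "c i j = g' i j (z $ i + z $ j)" using False zq by (simp add: c_def)
      show ?thesis
      proof (cases "i = j")
        case True
        then have "c i j = g' i i (2 * z $ i)" using cz by simp
        then show ?thesis using diag[OF zU, of i] True by simp
      next
        case False
        then show ?thesis using offdiag[OF zU False] cz by simp
      qed
    qed
    have coff: "i \<noteq> j \<Longrightarrow> c i j \<ge> l" for i j using cq[of i j] by auto
    have cdiag: "c i i \<ge> 0" for i using cq[of i i] lpos by auto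
    have DD: "(F x - F y) $ i = (\<Sum>j\<in>UNIV. c i j * ((x - y) $ i + (x - y) $ j))" for i
    proof -
      have "(F x - F y) $ i = (\<Sum>j\<in>UNIV. g i j (x $ i + x $ j) - g i j (y $ i + y $ j))"
        by (simp add: F_def sum_subtractf)
      also have "\<dots> = (\<Sum>j\<in>UNIV. c i j * ((x - y) $ i + (x - y) $ j))"
      proof (rule sum.cong)
        fix j
        show "g i j (x $ i + x $ j) - g i j (y $ i + y $ j) = c i j * ((x - y) $ i + (x - y) $ j)"
        proof (cases "x $ i + x $ j = y $ i + y $ j")
          case True then show ?thesis by (simp add: c_def algebra_simps)
        next
          case False
          then have nz: "(x $ i + x $ j) - (y $ i + y $ j) \<noteq> 0" by simp
          have e1: "(x - y) $ i + (x - y) $ j = (x $ i + x $ j) - (y $ i + y $ j)" by simp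
          show ?thesis unfolding e1 using nz False by (simp add: c_def)
        qed
      qed simp
      finally show ?thesis .
    qed
    obtain k where k: "\<bar>(x - y) $ k\<bar> = maxnorm (x - y)" using maxnorm_attained by blast
    have "2*(real CARD('n)-1)*(real CARD('n)-2)/(3*real CARD('n)-4) * l * maxnorm (x - y) \<le> maxnorm (F x - F y)"
      by (rule core[where d="\<lambda>i. (x - y) $ i" and D="\<lambda>i. (F x - F y) $ i" and c=c and k=k,
            OF n3 lpos csym coff cdiag DD maxnorm_ge k maxnorm_ge])
    then show ?thesis unfolding K_def N_def .
  qed
  have inj: "inj_on F U"
  proof (rule inj_onI)
    fix x y assume xU: "x \<in> U" and yU: "y \<in> U" and eq: "F x = F y"
    have "K * l * maxnorm (x - y) \<le> 0" using key[OF xU yU] eq by (simp add: maxnorm_def)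
    then have "maxnorm (x - y) \<le> 0" using Kpos lpos by (simp add: mult_le_0_iff)
    then have "\<bar>(x - y) $ i\<bar> \<le> 0" for i using maxnorm_ge[of "x - y" i] by linarith
    then show "x = y" by (simp add: vec_eq_iff)
  qed
  have bound: "maxnorm (the_inv_into U F d - the_inv_into U F d')
         \<le> (3 * real CARD('n) - 4) / (2 * l * (real CARD('n) - 1) * (real CARD('n) - 2)) * maxnorm (d - d')"
    if d: "d \<in> F ` U" and d': "d' \<in> F ` U" for d d'
  proof -
    obtain x where xU: "x \<in> U" and dx: "d = F x" using d by blast
    obtain y where yU: "y \<in> U" and dy: "d' = F y" using d' by blast
    have ix: "the_inv_into U F d = x" using the_inv_into_f_f[OF inj xU] dx by simp
    have iy: "the_inv_into U F d' = y" using the_inv_into_f_f[OF inj yU] dy by simp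
    have kk: "(K * l) * maxnorm (x - y) \<le> maxnorm (d - d')" using key[OF xU yU] dx dy by simp
    have Kl: "K * l > 0" using Kpos lpos by simp
    have "maxnorm (x - y) \<le> maxnorm (d - d') / (K * l)" using kk Kl by (simp add: le_divide_eq mult.commute)
    also have "maxnorm (d - d') / (K * l) = (3 * N - 4) / (2 * l * (N - 1) * (N - 2)) * maxnorm (d - d')"
      using N3 lpos unfolding K_def by (simp add: field_simps)
    finally show ?thesis unfolding ix iy N_def .
  qed
  show ?thesis using inj bound by blast
qed

end
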